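(* Let $k$ be an infinite field, $d>0$, $a\geq 7$ integers with $\gcd(a,d)=1$, $R=k[[t^a,t^{2a+d},t^{3a+3d},t^{4a+6d}]]$ with maximal ideal $\mathfrak{m}$, $I=(t^a)$, $F(I)=\bigoplus_{n\geq0}I^n/\mathfrak{m}I^n$ the fibre cone and $G_{\mathfrak{m}}=\bigoplus_{n\geq0}\mathfrak{m}^n/\mathfrak{m}^{n+1}$ the tangent cone. Then $G_{\mathfrak{m}}$ is a free graded $F(I)$-module and $$G_{\mathfrak{m}}\cong\bigoplus_{k=0}^{\lfloor a/6\rfloor+2}F(I)(-k)^{t_k},$$ where $t_k=\#\{i\mid 0\leq i\leq a-1,\ \mu_i+\nu_i+\xi_i=k\}$.
   Context: For $1\leq i\leq a-1$ write $i=6\mu_i+q_i$ with $0\leq q_i<6$, set $(\nu_i,\xi_i)=(1,q_i-3)$ if $q_i\geq3$ and $(\nu_i,\xi_i)=(0,q_i)$ if $q_i<3$; set $(\mu_0,\nu_0,\xi_0)=(0,0,0)$. $F(I)(-k)$ denotes the graded module $F(I)$ with degrees shifted by $k$. *)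

theory Defs
  imports "HOL-Computational_Algebra.Formal_Power_Series"
begin

definition semigrp :: "nat \<Rightarrow> nat \<Rightarrow> nat set" where
  "semigrp a d = {a*x1 + (2*a+d)*x2 + (3*a+3*d)*x3 + (4*a+6*d)*x4 | x1 x2 x3 x4. True}"

text \<open>R = k[[t^a, t^(2a+d), t^(3a+3d), t^(4a+6d)]] as the subring of k[[t]] of power series
  supported on the semigroup.\<close>
definition Rring :: "nat \<Rightarrow> nat \<Rightarrow> ('k::field) fps set" where
  "Rring a d = {f. \<forall>n. fps_nth f n \<noteq> 0 \<longrightarrow> n \<in> semigrp a d}"

definition max_ideal :: "nat \<Rightarrow> nat \<Rightarrow> ('k::field) fps set" where
  "max_ideal a d = {f \<in> Rring a d. fps_nth f 0 = 0}"

definition Iideal :: "nat \<Rightarrow> nat \<Rightarrow> ('k::field) fps set" where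
  "Iideal a d = {fps_X ^ a * f | f. f \<in> Rring a d}"

inductive_set ideal_prod :: "'a::comm_ring_1 set \<Rightarrow> 'a set \<Rightarrow> 'a set"
  for A B :: "'a set" where
  zero: "0 \<in> ideal_prod A B"
| add: "x \<in> A \<Longrightarrow> y \<in> B \<Longrightarrow> s \<in> ideal_prod A B \<Longrightarrow> x * y + s \<in> ideal_prod A B"

fun ideal_pow :: "'a::comm_ring_1 set \<Rightarrow> 'a set \<Rightarrow> nat \<Rightarrow> 'a set" where
  "ideal_pow R J 0 = R"
| "ideal_pow R J (Suc n) = ideal_prod (ideal_pow R J n) J"

text \<open>The homogeneous representatives b i (i < r), b i in m^(deg i), give a homogeneous
  basis of the tangent cone G_m = \<Oplus> m^n/m^(n+1) as a graded module over the fibre cone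
  F(I) = \<Oplus> I^n/(m I^n), where the class of c in I^j acts on the class of g in m^n by the
  class of c*g in m^(n+j).  This is the literal meaning of G_m being isomorphic, as a graded
  F(I)-module, to \<Oplus>_i F(I)(-deg i).\<close>
definition homog_basis ::
  "('k::field) fps set \<Rightarrow> 'k fps set \<Rightarrow> 'k fps set \<Rightarrow> nat \<Rightarrow> (nat \<Rightarrow> 'k fps) \<Rightarrow> (nat \<Rightarrow> nat) \<Rightarrow> bool" where
  "homog_basis R m I r b deg \<longleftrightarrow>
     (\<forall>i<r. b i \<in> ideal_pow R m (deg i)) \<and>
     \<comment> \<open>generation in every degree n\<close>
     (\<forall>n. \<forall>h \<in> ideal_pow R m n. \<exists>c. (\<forall>i<r. deg i \<le> n \<longrightarrow> c i \<in> ideal_pow R I (n - deg i)) \<and>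
          h - (\<Sum>i\<in>{i. i < r \<and> deg i \<le> n}. c i * b i) \<in> ideal_pow R m (Suc n)) \<and>
     \<comment> \<open>linear independence over F(I) in every degree n\<close>
     (\<forall>n c. (\<forall>i<r. deg i \<le> n \<longrightarrow> c i \<in> ideal_pow R I (n - deg i)) \<longrightarrow>
          (\<Sum>i\<in>{i. i < r \<and> deg i \<le> n}. c i * b i) \<in> ideal_pow R m (Suc n) \<longrightarrow>
          (\<forall>i<r. deg i \<le> n \<longrightarrow> c i \<in> ideal_prod m (ideal_pow R I (n - deg i))))"

text \<open>The numbers mu_i + nu_i + xi_i (with value 0 for i = 0).\<close>
definition wt :: "nat \<Rightarrow> nat" where
  "wt i = (let q = i mod 6 in i div 6 + (if q \<ge> 3 then 1 + (q - 3) else q))"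

definition tk :: "nat \<Rightarrow> nat \<Rightarrow> nat" where
  "tk a k = card {i. i \<le> a - 1 \<and> wt i = k}"

end

theory Submission
  imports Defs "HOL-Number_Theory.Cong"
begin

definition rep :: "nat \<Rightarrow> nat \<Rightarrow> nat \<Rightarrow> nat \<Rightarrow> nat \<Rightarrow> nat \<Rightarrow> nat" where
 "rep a d x1 x2 x3 x4 = a*x1 + (2*a+d)*x2 + (3*a+3*d)*x3 + (4*a+6*d)*x4"

definition T :: "nat \<Rightarrow> nat \<Rightarrow> nat \<Rightarrow> nat set" where
 "T a d n = {rep a d x1 x2 x3 x4 | x1 x2 x3 x4. n \<le> x1+x2+x3+x4}"

lemma semigrp_T: "semigrp a d = T a d 0" by (simp add: semigrp_def T_def rep_def)

lemma T_add: assumes "s \<in> T a d n" "t \<in> T a d m" shows "s + t \<in> T a d (n+m)"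
proof -
  obtain x1 x2 x3 x4 where x: "s = rep a d x1 x2 x3 x4" "n \<le> x1+x2+x3+x4" using assms(1) by (auto simp: T_def)
  obtain y1 y2 y3 y4 where y: "t = rep a d y1 y2 y3 y4" "m \<le> y1+y2+y3+y4" using assms(2) by (auto simp: T_def)
  have "s + t = rep a d (x1+y1) (x2+y2) (x3+y3) (x4+y4)" using x y by (simp add: rep_def algebra_simps)
  moreover have "n + m \<le> (x1+y1) + (x2+y2) + (x3+y3) + (x4+y4)" using x y by simp
  ultimately show ?thesis unfolding T_def by blast
qed

lemma rep_eq: "rep a d x1 x2 x3 x4 = (x1+2*x2+3*x3+4*x4)*a + (x2+3*x3+6*x4)*d"
  by (simp add: rep_def algebra_simps)

lemma T1_pos: assumes "a > 0" "g \<in> T a d 1" shows "a \<le> g"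
proof -
  obtain x1 x2 x3 x4 where x: "g = rep a d x1 x2 x3 x4" "1 \<le> x1+x2+x3+x4" using assms(2) by (auto simp: T_def)
  have "1 \<le> x1+2*x2+3*x3+4*x4" using x by linarith
  hence "a \<le> (x1+2*x2+3*x3+4*x4)*a" by simp
  thus ?thesis using x(1) unfolding rep_eq by linarith
qed

lemma T_I: "n \<le> x1+x2+x3+x4 \<Longrightarrow> rep a d x1 x2 x3 x4 \<in> T a d n"
  unfolding T_def by blast

lemma gen_T1: "a \<in> T a d 1" "2*a+d \<in> T a d 1" "3*a+3*d \<in> T a d 1" "4*a+6*d \<in> T a d 1"
  using T_I[of 1 1 0 0 0 a d] T_I[of 1 0 1 0 0 a d] T_I[of 1 0 0 1 0 a d] T_I[of 1 0 0 0 1 a d]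
  unfolding rep_def by simp_all

lemma T_mono: "m \<le> n \<Longrightarrow> s \<in> T a d n \<Longrightarrow> s \<in> T a d m"
  unfolding T_def by force

lemma T_pos: assumes "s \<in> T a d 0" "s \<noteq> 0" shows "s \<in> T a d 1"
proof -
  obtain x1 x2 x3 x4 where x: "s = rep a d x1 x2 x3 x4" using assms(1) by (auto simp: T_def)
  have "1 \<le> x1+x2+x3+x4" using x assms(2) by (cases "x1+x2+x3+x4 = 0") (auto simp: rep_def)
  thus ?thesis using x unfolding T_def by blast
qed

lemma T_Suc: assumes "s \<in> T a d (Suc n)"
  shows "(a \<le> s \<and> s - a \<in> T a d n) \<or> (2*a+d \<le> s \<and> s - (2*a+d) \<in> T a d n) \<or>
         (3*a+3*d \<le> s \<and> s - (3*a+3*d) \<in> T a d n) \<or> (4*a+6*d \<le> s \<and> s - (4*a+6*d) \<in> T a d n)"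
proof -
  obtain x1 x2 x3 x4 where x: "s = rep a d x1 x2 x3 x4" "Suc n \<le> x1+x2+x3+x4" using assms by (auto simp: T_def)
  consider "x1 \<ge> 1" | "x2 \<ge> 1" | "x3 \<ge> 1" | "x4 \<ge> 1" using x(2) by linarith
  thus ?thesis
  proof cases
    case 1
    then obtain y where y: "x1 = Suc y" by (cases x1) auto
    have "s = a + rep a d y x2 x3 x4" using x y by (simp add: rep_def)
    moreover have "n \<le> y+x2+x3+x4" using x y by simp
    ultimately show ?thesis unfolding T_def by auto
  next
    case 2
    then obtain y where y: "x2 = Suc y" by (cases x2) auto
    have "s = (2*a+d) + rep a d x1 y x3 x4" using x y by (simp add: rep_def)
    moreover have "n \<le> x1+y+x3+x4" using x y by simp
    ultimately show ?thesis unfolding T_def by auto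
  next
    case 3
    then obtain y where y: "x3 = Suc y" by (cases x3) auto
    have "s = (3*a+3*d) + rep a d x1 x2 y x4" using x y by (simp add: rep_def)
    moreover have "n \<le> x1+x2+y+x4" using x y by simp
    ultimately show ?thesis unfolding T_def by auto
  next
    case 4
    then obtain y where y: "x4 = Suc y" by (cases x4) auto
    have "s = (4*a+6*d) + rep a d x1 x2 x3 y" using x y by (simp add: rep_def)
    moreover have "n \<le> x1+x2+x3+y" using x y by simp
    ultimately show ?thesis unfolding T_def by auto
  qed
qed

definition e2 :: "nat \<Rightarrow> nat" where "e2 i = (if i mod 6 < 3 then i mod 6 else i mod 6 - 3)"
definition e3 :: "nat \<Rightarrow> nat" where "e3 i = (if i mod 6 < 3 then 0 else 1)"
definition e4 :: "nat \<Rightarrow> nat" where "e4 i = i div 6"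
definition w :: "nat \<Rightarrow> nat \<Rightarrow> nat \<Rightarrow> nat" where "w a d i = rep a d 0 (e2 i) (e3 i) (e4 i)"

lemma wt_e: "wt i = e2 i + e3 i + e4 i"
  by (simp add: wt_def e2_def e3_def e4_def Let_def)

lemma J_e: "e2 i + 3*e3 i + 6*e4 i = i"
  by (simp add: e2_def e3_def e4_def)

lemma e_small: "e2 i \<le> 2" "e3 i \<le> 1"
  by (auto simp: e2_def e3_def)

lemma w_eq: "w a d i = (2*e2 i + 3*e3 i + 4*e4 i)*a + i*d"
proof -
  have "w a d i = (2*e2 i + 3*e3 i + 4*e4 i)*a + (e2 i + 3*e3 i + 6*e4 i)*d"
    by (simp add: w_def rep_def algebra_simps)
  thus ?thesis using J_e by simp
qed

lemma w_T: "w a d i + m*a \<in> T a d (wt i + m)"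
proof -
  have "w a d i + m*a = rep a d m (e2 i) (e3 i) (e4 i)" by (simp add: w_def rep_def algebra_simps)
  thus ?thesis unfolding T_def wt_e by force
qed

lemma modlem: assumes "coprime a d" "X*a + J*d = Y*a + i*(d::nat)"
  shows "J mod a = i mod a"
proof -
  have "[X*a + J*d = Y*a + i*d] (mod a)" using assms by simp
  have "(X*a + J*d) mod a = (Y*a + i*d) mod a" using assms(2) by simp
  hence "(J*d) mod a = (i*d) mod a" by simp
  hence "[J*d = i*d] (mod a)" unfolding cong_def .
  hence "[J = i] (mod a)" using assms(1) by (simp add: cong_mult_rcancel_nat coprime_commute)
  thus ?thesis by (simp add: cong_def)
qed

lemma res: assumes "(x2 + 3*x3) mod 6 = i mod 6"
  shows "e2 i + e3 i \<le> x2 + x3 \<and> 4*e2 i + 3*e3 i \<le> 4*x2 + 3*(x3::nat)"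
proof (cases "x2 \<le> 2 \<and> x3 \<le> 3")
  case True
  then have "x2 \<in> {0,1,2}" "x3 \<in> {0,1,2,3}" by auto
  then show ?thesis using assms by (auto simp: e2_def e3_def)
next
  case False
  then show ?thesis using e_small[of i] by auto
qed

lemma mod6: "x2 + 3*x3 + 6*x4 = (i::nat) \<Longrightarrow> (x2+3*x3) mod 6 = i mod 6"
  using mod_mult_self2[of "x2+3*x3" 6 x4] by simp

lemma core: assumes "coprime a d" "a \<ge> 7" "i < a" "rep a d x1 x2 x3 x4 = w a d i + m*a"
  shows "x1+x2+x3+x4 \<le> wt i + m"
proof -
  define X where "X = x1+2*x2+3*x3+4*x4"
  define J where "J = x2+3*x3+6*x4"
  define A where "A = 2*e2 i + 3*e3 i + 4*e4 i"
  have eq: "X*a + J*d = (A+m)*a + i*d" using assms(4) unfolding X_def J_def A_def rep_eq w_eq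
    by (simp add: algebra_simps)
  have "J mod a = i" using modlem[OF assms(1) eq] assms(3) by simp
  define j where "j = J div a"
  have Jj: "J = i + j*a" using \<open>J mod a = i\<close> unfolding j_def using div_mult_mod_eq[of J a] by linarith
  have "(X + j*d)*a = (A+m)*a" using eq Jj by (simp add: algebra_simps)
  hence XA: "X + j*d = A + m" using assms by simp
  have Ji: "J = e2 i + 3*e3 i + 6*e4 i" if "j = 0" using Jj J_e[of i] that by simp
  show ?thesis
  proof (cases "j = 0")
    case True
    have "(x2 + 3*x3) mod 6 = i mod 6" using Jj True unfolding J_def by (intro mod6) simp
    from res[OF this] Ji[OF True] XA True show ?thesis unfolding X_def A_def J_def wt_e by linarith
  next
    case False
    have "1*a \<le> j*a" using False by (intro mult_le_mono1) simp
    hence "j*a \<ge> 7" using assms(2) by linarith 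
    then show ?thesis using XA Jj J_e[of i] e_small[of i] unfolding X_def A_def J_def wt_e by linarith
  qed
qed

lemma K1: assumes "coprime a d" "a \<ge> 7" "s \<in> T a d 0"
  shows "\<exists>i<a. \<exists>m. s = w a d i + m*a"
proof -
  obtain x1 x2 x3 x4 where x: "s = rep a d x1 x2 x3 x4" using assms(3) by (auto simp: T_def)
  define X where "X = x1+2*x2+3*x3+4*x4"
  define J where "J = x2+3*x3+6*x4"
  define i where "i = J mod a"
  define j where "j = J div a"
  define A where "A = 2*e2 i + 3*e3 i + 4*e4 i"
  have ia: "i < a" using assms(2) unfolding i_def by simp
  have Jj: "J = i + j*a" unfolding i_def j_def by simp
  have sX: "s = X*a + J*d" using x unfolding X_def J_def rep_eq by simp
  have wA: "w a d i = A*a + i*d" unfolding A_def w_eq by simp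
  have "A \<le> X + j*d"
  proof (cases "j = 0")
    case True
    have "(x2 + 3*x3) mod 6 = i mod 6" using Jj True unfolding J_def by (intro mod6) simp
    from res[OF this] True Jj J_e[of i] show ?thesis unfolding X_def A_def J_def by linarith
  next
    case False
    have "1*a \<le> j*a" using False by (intro mult_le_mono1) simp
    hence "j*a \<ge> 7" using assms(2) by linarith
    then show ?thesis using Jj J_e[of i] e_small[of i] unfolding X_def A_def J_def by linarith
  qed
  hence le: "A*a \<le> (X + j*d)*a" by (rule mult_le_mono1)
  have s2: "s = (X + j*d)*a + i*d" using sX Jj by (simp add: algebra_simps)
  have "(X + j*d - A)*a = (X+j*d)*a - A*a" by (simp add: diff_mult_distrib)
  then have "s = w a d i + (X + j*d - A)*a" using s2 wA le by linarith
  thus ?thesis using ia by blast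
qed

lemma w_inj: assumes "coprime a d" "i < a" "k < a" "w a d i + m*a = w a d k + m'*a"
  shows "i = k"
proof -
  have "(2*e2 i + 3*e3 i + 4*e4 i + m)*a + i*d = (2*e2 k + 3*e3 k + 4*e4 k + m')*a + k*d"
    using assms(4) unfolding w_eq by (simp add: algebra_simps)
  from modlem[OF assms(1) this] assms show ?thesis by simp
qed

lemma wt_bound: assumes "i < a" shows "wt i \<le> a div 6 + 2"
proof -
  have h1: "i div 6 \<le> a div 6" using assms by (simp add: div_le_mono)
  have h2: "i div 6 + 1 \<le> a div 6" if "i mod 6 = 5"
  proof -
    have "i = i div 6 * 6 + 5" using div_mult_mod_eq[of i 6] that by simp
    hence "i div 6 * 6 + 6 \<le> a" using assms by linarith
    hence "(i div 6 + 1) * 6 \<le> a" by simp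
    hence "((i div 6 + 1) * 6) div 6 \<le> a div 6" by (rule div_le_mono)
    thus ?thesis by simp
  qed
  have "i mod 6 < 6" by simp
  then show ?thesis unfolding wt_def Let_def using h1 h2
    by (cases "i mod 6 = 5") (auto split: if_splits)
qed


lemma ideal_prod_add: "x \<in> ideal_prod A B \<Longrightarrow> y \<in> ideal_prod A B \<Longrightarrow> x + y \<in> ideal_prod A B"
proof (induction rule: ideal_prod.induct)
  case zero then show ?case by simp
next
  case (add x1 y1 s)
  have "s + y \<in> ideal_prod A B" using add.IH add.prems by blast
  hence "x1 * y1 + (s + y) \<in> ideal_prod A B" by (rule ideal_prod.add[OF add.hyps(1) add.hyps(2)])
  thus ?case by (simp add: add.assoc)
qed

lemma prod_mem: "x \<in> A \<Longrightarrow> y \<in> B \<Longrightarrow> x * y \<in> ideal_prod A B"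
  using ideal_prod.add[OF _ _ ideal_prod.zero] by fastforce

lemma mult_nz: fixes f g :: "'a::comm_ring_1 fps" assumes "(fps_nth (f * g) k) \<noteq> 0" shows "\<exists>i\<le>k. (fps_nth f i) \<noteq> 0 \<and> (fps_nth g (k - i)) \<noteq> 0"
proof (rule ccontr)
  assume neg: "\<not> ?thesis"
  have "\<forall>i\<in>{0..k}. (fps_nth f i) * (fps_nth g (k - i)) = 0"
  proof
    fix i assume "i \<in> {0..k}"
    hence "i \<le> k" by simp
    with neg have "fps_nth f i = 0 \<or> fps_nth g (k-i) = 0" by blast
    thus "(fps_nth f i) * (fps_nth g (k - i)) = 0" by auto
  qed
  hence "(\<Sum>i=0..k. (fps_nth f i) * (fps_nth g (k - i))) = 0" by simp
  thus False using assms by (simp add: fps_mult_nth)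
qed

lemma Rring_T: "f \<in> Rring a d \<longleftrightarrow> (\<forall>s. (fps_nth f s) \<noteq> 0 \<longrightarrow> s \<in> T a d 0)"
  by (simp add: Rring_def semigrp_T)

lemma Rring_mult: assumes "f \<in> Rring a d" "g \<in> Rring a d" shows "f * g \<in> Rring a d"
  unfolding Rring_T
proof (intro allI impI)
  fix k assume "(fps_nth (f*g) k) \<noteq> 0"
  then obtain i where "i \<le> k" "(fps_nth f i) \<noteq> 0" "(fps_nth g (k-i)) \<noteq> 0" using mult_nz by blast
  hence "i \<in> T a d 0" "k - i \<in> T a d 0" using assms by (auto simp: Rring_T)
  from T_add[OF this] show "k \<in> T a d 0" using \<open>i \<le> k\<close> by simp
qed

lemma Rring_add: assumes "f \<in> Rring a d" "g \<in> Rring a d" shows "f + g \<in> Rring a d"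
  unfolding Rring_T
proof (intro allI impI)
  fix s assume "(fps_nth (f+g) s) \<noteq> 0"
  hence "(fps_nth f s) \<noteq> 0 \<or> (fps_nth g s) \<noteq> 0" by (cases "(fps_nth f s) = 0") auto
  thus "s \<in> T a d 0" using assms unfolding Rring_T by blast
qed

lemma Rring_one: "(1::'k::field fps) \<in> Rring a d"
  unfolding Rring_T T_def by (auto intro!: exI[of _ 0] simp: rep_def)

lemma Rring_const: "(fps_const c::'k::field fps) \<in> Rring a d"
  unfolding Rring_T T_def by (auto intro!: exI[of _ 0] simp: rep_def)

lemma Ipow: "ideal_pow (Rring a d :: 'k fps set) (Iideal a d) n = {fps_X^(n*a) * f | f. f \<in> (Rring a d :: 'k::field fps set)}"
proof (induction n)
  case 0 then show ?case by simp
next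
  case (Suc n)
  show ?case
  proof
    show "ideal_pow (Rring a d :: 'k fps set) (Iideal a d) (Suc n) \<subseteq> {fps_X^(Suc n*a) * f | f. f \<in> (Rring a d :: 'k fps set)}"
    proof
      fix z assume "z \<in> ideal_pow (Rring a d :: 'k fps set) (Iideal a d) (Suc n)"
      hence "z \<in> ideal_prod (ideal_pow (Rring a d :: 'k fps set) (Iideal a d) n) (Iideal a d)" by simp
      thus "z \<in> {fps_X^(Suc n*a) * f | f. f \<in> (Rring a d :: 'k fps set)}"
      proof (induction rule: ideal_prod.induct)
        case zero
        have "(0::'k fps) = fps_X^(Suc n*a) * 0" by simp
        moreover have "(0::'k fps) \<in> Rring a d" by (simp add: Rring_def)
        ultimately show ?case by blast
      next
        case (add x y s)
        obtain f where f: "x = fps_X^(n*a) * f" "f \<in> Rring a d" using add.hyps(1) Suc.IH by auto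
        obtain g where g: "y = fps_X^a * g" "g \<in> Rring a d" using add.hyps(2) by (auto simp: Iideal_def)
        obtain h where h: "s = fps_X^(Suc n*a) * h" "h \<in> Rring a d" using add.IH by auto
        have "x*y+s = fps_X^(Suc n*a) * (f*g + h)" using f g h by (simp add: power_add algebra_simps)
        moreover have "f*g+h \<in> Rring a d" using f g h Rring_mult Rring_add by blast
        ultimately show ?case by blast
      qed
    qed
  next
    show "{fps_X^(Suc n*a) * f | f. f \<in> (Rring a d :: 'k fps set)} \<subseteq> ideal_pow (Rring a d :: 'k fps set) (Iideal a d) (Suc n)"
    proof
      fix z assume "z \<in> {fps_X^(Suc n*a) * f | f. f \<in> (Rring a d :: 'k fps set)}"
      then obtain f where f: "z = fps_X^(Suc n*a) * f" "f \<in> Rring a d" by auto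
      have "fps_X^(n*a) * f \<in> ideal_pow (Rring a d :: 'k fps set) (Iideal a d) n" using Suc.IH f by auto
      moreover have "fps_X^a * 1 \<in> (Iideal a d :: 'k fps set)" unfolding Iideal_def using Rring_one by blast
      ultimately have "(fps_X^(n*a) * f) * (fps_X^a * 1) \<in> ideal_pow (Rring a d :: 'k fps set) (Iideal a d) (Suc n)"
        using prod_mem by simp
      moreover have "(fps_X^(n*a) * f) * (fps_X^a * 1) = z" using f by (simp add: power_add algebra_simps)
      ultimately show "z \<in> ideal_pow (Rring a d :: 'k fps set) (Iideal a d) (Suc n)" by simp
    qed
  qed
qed

lemma max_T1: assumes "f \<in> max_ideal a d" "(fps_nth f s) \<noteq> 0" shows "s \<in> T a d 1"
proof -
  have "s \<in> T a d 0" using assms by (auto simp: max_ideal_def Rring_T)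
  moreover have "s \<noteq> 0"
  proof
    assume "s = 0" then show False using assms by (simp add: max_ideal_def)
  qed
  ultimately show ?thesis by (rule T_pos)
qed

lemma pow_sub: "f \<in> ideal_pow (Rring a d) (max_ideal a d :: 'k::field fps set) n \<Longrightarrow> (fps_nth f s) \<noteq> 0 \<Longrightarrow> s \<in> T a d n"
proof (induction n arbitrary: f s)
  case 0 then show ?case by (simp add: Rring_T)
next
  case (Suc n)
  from Suc.prems(1) have "f \<in> ideal_prod (ideal_pow (Rring a d) (max_ideal a d) n) (max_ideal a d)" by simp
  then show ?case using Suc.prems(2)
  proof (induction arbitrary: s rule: ideal_prod.induct)
    case zero then show ?case by simp
  next
    case (add x y t)
    show ?case
    proof (cases "(fps_nth t s) = 0")
      case False then show ?thesis using add.IH by blast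
    next
      case True
      hence "(fps_nth (x*y) s) \<noteq> 0" using add.prems by simp
      then obtain i where "i \<le> s" "(fps_nth x i) \<noteq> 0" "(fps_nth y (s-i)) \<noteq> 0" using mult_nz by blast
      hence "i \<in> T a d n" "s - i \<in> T a d 1" using Suc.IH add.hyps max_T1 by blast+
      from T_add[OF this] show ?thesis using \<open>i \<le> s\<close> by simp
    qed
  qed
qed

lemma X_max: assumes "a > 0" "g \<in> T a d 1" shows "(fps_X^g :: 'k::field fps) \<in> max_ideal a d"
proof -
  have "g \<in> T a d 0" using T_mono[OF _ assms(2)] by simp
  moreover have "g \<noteq> 0" using T1_pos[OF assms] assms(1) by linarith
  ultimately show ?thesis by (auto simp: max_ideal_def Rring_T)
qed

lemma pow_sup: assumes "a > 0" shows "(\<forall>s. (fps_nth f s) \<noteq> 0 \<longrightarrow> s \<in> T a d n) \<Longrightarrow> f \<in> ideal_pow (Rring a d) (max_ideal a d :: 'k::field fps set) n"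
proof (induction n arbitrary: f)
  case 0 then show ?case by (simp add: Rring_T)
next
  case (Suc n)
  define g1 where "g1 = a"
  define g2 where "g2 = 2*a+d"
  define g3 where "g3 = 3*a+3*d"
  define g4 where "g4 = 4*a+6*d"
  define P1 where "P1 s = (g1 \<le> s \<and> s - g1 \<in> T a d n)" for s
  define P2 where "P2 s = (\<not> P1 s \<and> g2 \<le> s \<and> s - g2 \<in> T a d n)" for s
  define P3 where "P3 s = (\<not> P1 s \<and> \<not> P2 s \<and> g3 \<le> s \<and> s - g3 \<in> T a d n)" for s
  define P4 where "P4 s = (\<not> P1 s \<and> \<not> P2 s \<and> \<not> P3 s \<and> g4 \<le> s \<and> s - g4 \<in> T a d n)" for s
  define F where "F P g = (Abs_fps (\<lambda>k. if P (k+g) then (fps_nth f (k+g)) else 0) :: 'k fps)" for P g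
  let ?M = "ideal_pow (Rring a d) (max_ideal a d :: 'k fps set)"
  have piece: "F P g * fps_X^g \<in> ?M (Suc n)" if "g \<in> T a d 1" "\<And>s. P s \<Longrightarrow> g \<le> s \<and> s - g \<in> T a d n" for P g
  proof -
    have "F P g \<in> ?M n"
    proof (rule Suc.IH, intro allI impI)
      fix s assume "fps_nth (F P g) s \<noteq> 0"
      hence "P (s+g)" by (auto simp: F_def split: if_splits)
      from that(2)[OF this] show "s \<in> T a d n" by simp
    qed
    moreover have "fps_X^g \<in> (max_ideal a d :: 'k fps set)" using X_max[OF assms that(1)] .
    ultimately show ?thesis using prod_mem by simp
  qed
  have coef: "(fps_nth (F P g * fps_X^g) s) = (if P s then (fps_nth f s) else 0)" if "\<And>s. P s \<Longrightarrow> g \<le> s" for P g s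
    using that[of s] by (auto simp: F_def fps_X_power_mult_right_nth)
  have p1: "F P1 g1 * fps_X^g1 \<in> ?M (Suc n)" by (rule piece) (auto simp: P1_def g1_def gen_T1[simplified])
  have p2: "F P2 g2 * fps_X^g2 \<in> ?M (Suc n)" by (rule piece) (auto simp: P2_def g2_def gen_T1[simplified])
  have p3: "F P3 g3 * fps_X^g3 \<in> ?M (Suc n)" by (rule piece) (auto simp: P3_def g3_def gen_T1[simplified])
  have p4: "F P4 g4 * fps_X^g4 \<in> ?M (Suc n)" by (rule piece) (auto simp: P4_def g4_def gen_T1[simplified])
  have sum: "f = F P1 g1 * fps_X^g1 + F P2 g2 * fps_X^g2 + F P3 g3 * fps_X^g3 + F P4 g4 * fps_X^g4"
  proof (rule fps_ext)
    fix s
    have c: "(fps_nth (F P1 g1 * fps_X^g1 + F P2 g2 * fps_X^g2 + F P3 g3 * fps_X^g3 + F P4 g4 * fps_X^g4) s)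
      = (if P1 s then (fps_nth f s) else 0) + (if P2 s then (fps_nth f s) else 0) + (if P3 s then (fps_nth f s) else 0) + (if P4 s then (fps_nth f s) else 0)"
    proof -
      have c1: "fps_nth (F P1 g1 * fps_X^g1) s = (if P1 s then fps_nth f s else 0)" by (rule coef) (simp add: P1_def)
      have c2: "fps_nth (F P2 g2 * fps_X^g2) s = (if P2 s then fps_nth f s else 0)" by (rule coef) (simp add: P2_def)
      have c3: "fps_nth (F P3 g3 * fps_X^g3) s = (if P3 s then fps_nth f s else 0)" by (rule coef) (simp add: P3_def)
      have c4: "fps_nth (F P4 g4 * fps_X^g4) s = (if P4 s then fps_nth f s else 0)" by (rule coef) (simp add: P4_def)
      show ?thesis by (simp only: fps_add_nth c1 c2 c3 c4)
    qed
    show "(fps_nth f s) = (fps_nth (F P1 g1 * fps_X^g1 + F P2 g2 * fps_X^g2 + F P3 g3 * fps_X^g3 + F P4 g4 * fps_X^g4) s)"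
    proof (cases "(fps_nth f s) = 0")
      case True then show ?thesis unfolding c by simp
    next
      case False
      hence "s \<in> T a d (Suc n)" using Suc.prems by blast
      from T_Suc[OF this] have "P1 s \<or> P2 s \<or> P3 s \<or> P4 s"
        unfolding P1_def P2_def P3_def P4_def g1_def g2_def g3_def g4_def by blast
      then show ?thesis unfolding c by (auto simp: P2_def P3_def P4_def)
    qed
  qed
  let ?P = "ideal_prod (?M n) (max_ideal a d :: 'k fps set)"
  have p1': "F P1 g1 * fps_X^g1 \<in> ?P" using p1 by simp
  have p2': "F P2 g2 * fps_X^g2 \<in> ?P" using p2 by simp
  have p3': "F P3 g3 * fps_X^g3 \<in> ?P" using p3 by simp
  have p4': "F P4 g4 * fps_X^g4 \<in> ?P" using p4 by simp
  have "F P1 g1 * fps_X^g1 + F P2 g2 * fps_X^g2 + F P3 g3 * fps_X^g3 + F P4 g4 * fps_X^g4 \<in> ?P"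
    by (intro ideal_prod_add p1' p2' p3' p4')
  then show ?case by (subst sum) simp
qed


lemma gen_comb: assumes "coprime a d" "a \<ge> 7" "k \<in> T a d n"
  and "\<forall>i<a. wt i \<le> n \<longrightarrow> k \<noteq> w a d i + (n - wt i)*a"
  shows "k \<in> T a d (Suc n)"
proof -
  have "k \<in> T a d 0" using T_mono[OF _ assms(3)] by simp
  from K1[OF assms(1,2) this] obtain i m where im: "i < a" "k = w a d i + m*a" by blast
  obtain x1 x2 x3 x4 where x: "k = rep a d x1 x2 x3 x4" "n \<le> x1+x2+x3+x4" using assms(3) by (auto simp: T_def)
  have "x1+x2+x3+x4 \<le> wt i + m" using core[OF assms(1,2) im(1)] x(1) im(2) by simp
  hence nle: "n \<le> wt i + m" using x(2) by linarith
  have "wt i + m \<noteq> n"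
  proof
    assume h: "wt i + m = n"
    hence "wt i \<le> n" "m = n - wt i" by auto
    thus False using assms(4) im by auto
  qed
  hence "Suc n \<le> wt i + m" using nle by linarith
  thus ?thesis using T_mono[OF _ w_T[of a d i m]] im(2) by simp
qed

lemma not_next: assumes "coprime a d" "a \<ge> 7" "i < a" "wt i \<le> n"
  shows "w a d i + (n - wt i)*a \<notin> T a d (Suc n)"
proof
  assume "w a d i + (n - wt i)*a \<in> T a d (Suc n)"
  then obtain x1 x2 x3 x4 where x: "w a d i + (n - wt i)*a = rep a d x1 x2 x3 x4" "Suc n \<le> x1+x2+x3+x4" by (auto simp: T_def)
  have "x1+x2+x3+x4 \<le> wt i + (n - wt i)" using core[OF assms(1,2,3) x(1)[symmetric]] .
  thus False using x(2) assms(4) by linarith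
qed

theorem corollary6p7:
  fixes a d :: nat
  assumes "infinite (UNIV :: 'k::field set)"
    and "d > 0" and "a \<ge> 7" and "coprime a d"
  shows "\<exists>r (b :: nat \<Rightarrow> 'k fps) deg.
           homog_basis (Rring a d) (max_ideal a d) (Iideal a d) r b deg \<and>
           (\<forall>i<r. deg i \<le> a div 6 + 2) \<and>
           (\<forall>k \<le> a div 6 + 2. card {i. i < r \<and> deg i = k} = tk a k)"
proof -
  let ?R = "Rring a d :: 'k fps set"
  let ?M = "max_ideal a d :: 'k fps set"
  let ?I = "Iideal a d :: 'k fps set"
  define b where "b i = (fps_X ^ (w a d i) :: 'k fps)" for i
  define sv where "sv n i = w a d i + (n - wt i)*a" for n i
  have a0: "a > 0" using assms by simp
  have sv_inj: "i = j" if "i < a" "j < a" "sv n i = sv n j" for n i j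
    using w_inj[OF assms(4) that(1,2)] that(3) unfolding sv_def by blast
  have hb1: "\<forall>i<a. b i \<in> ideal_pow ?R ?M (wt i)"
  proof (intro allI impI)
    fix i assume "i < a"
    show "b i \<in> ideal_pow ?R ?M (wt i)" unfolding b_def
      by (rule pow_sup[OF a0]) (use w_T[of a d i 0] in simp)
  qed
  have hb2: "\<forall>n. \<forall>h \<in> ideal_pow ?R ?M n. \<exists>c. (\<forall>i<a. wt i \<le> n \<longrightarrow> c i \<in> ideal_pow ?R ?I (n - wt i)) \<and>
          h - (\<Sum>i\<in>{i. i < a \<and> wt i \<le> n}. c i * b i) \<in> ideal_pow ?R ?M (Suc n)"
  proof (intro allI ballI)
    fix n h assume h: "h \<in> ideal_pow ?R ?M n"
    define A where "A = {i. i < a \<and> wt i \<le> n}"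
    have finA: "finite A" unfolding A_def by simp
    define c where "c i = fps_const (fps_nth h (sv n i)) * fps_X^((n - wt i)*a)" for i
    have cb: "c i * b i = fps_const (fps_nth h (sv n i)) * fps_X^(sv n i)" for i
      unfolding c_def b_def sv_def by (simp add: power_add ac_simps)
    show "\<exists>c. (\<forall>i<a. wt i \<le> n \<longrightarrow> c i \<in> ideal_pow ?R ?I (n - wt i)) \<and>
          h - (\<Sum>i\<in>{i. i < a \<and> wt i \<le> n}. c i * b i) \<in> ideal_pow ?R ?M (Suc n)"
    proof (intro exI conjI allI impI)
      fix i assume "i < a" "wt i \<le> n"
      have "c i = fps_X^((n - wt i)*a) * fps_const (fps_nth h (sv n i))" by (simp add: c_def mult.commute)
      thus "c i \<in> ideal_pow ?R ?I (n - wt i)" unfolding Ipow using Rring_const by blast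
    next
      show "h - (\<Sum>i\<in>{i. i < a \<and> wt i \<le> n}. c i * b i) \<in> ideal_pow ?R ?M (Suc n)"
        unfolding A_def[symmetric]
      proof (rule pow_sup[OF a0], intro allI impI)
        fix k assume nz: "fps_nth (h - (\<Sum>i\<in>A. c i * b i)) k \<noteq> 0"
        have sumk: "fps_nth (\<Sum>i\<in>A. c i * b i) k = (\<Sum>i\<in>A. if k = sv n i then fps_nth h (sv n i) else 0)"
          by (simp add: fps_sum_nth cb) (intro sum.cong; simp)
        show "k \<in> T a d (Suc n)"
        proof (cases "\<exists>j\<in>A. k = sv n j")
          case True
          then obtain j where j: "j \<in> A" "k = sv n j" by blast
          have "(\<Sum>i\<in>A. if k = sv n i then fps_nth h (sv n i) else 0) = (\<Sum>i\<in>A. if i = j then fps_nth h k else 0)"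
          proof (rule sum.cong)
            fix i assume "i \<in> A"
            then show "(if k = sv n i then fps_nth h (sv n i) else 0) = (if i = j then fps_nth h k else 0)"
              using j sv_inj[of i j n] by (auto simp: A_def)
          qed simp
          also have "\<dots> = fps_nth h k" using j(1) finA by simp
          finally have "fps_nth (h - (\<Sum>i\<in>A. c i * b i)) k = 0" using sumk by simp
          thus ?thesis using nz by blast
        next
          case False
          hence "fps_nth (\<Sum>i\<in>A. c i * b i) k = 0" unfolding sumk by (intro sum.neutral) auto
          hence "fps_nth h k \<noteq> 0" using nz by simp
          hence "k \<in> T a d n" using pow_sub h by blast
          moreover have "\<forall>i<a. wt i \<le> n \<longrightarrow> k \<noteq> w a d i + (n - wt i)*a"
            using False unfolding A_def sv_def by blast
          ultimately show ?thesis using gen_comb[OF assms(4,3)] by blast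
        qed
      qed
    qed
  qed
  have hb3: "\<forall>n c. (\<forall>i<a. wt i \<le> n \<longrightarrow> c i \<in> ideal_pow ?R ?I (n - wt i)) \<longrightarrow>
          (\<Sum>i\<in>{i. i < a \<and> wt i \<le> n}. c i * b i) \<in> ideal_pow ?R ?M (Suc n) \<longrightarrow>
          (\<forall>i<a. wt i \<le> n \<longrightarrow> c i \<in> ideal_prod ?M (ideal_pow ?R ?I (n - wt i)))"
  proof (intro allI impI)
    fix n c i
    assume hc: "\<forall>i<a. wt i \<le> n \<longrightarrow> c i \<in> ideal_pow ?R ?I (n - wt i)"
      and hs: "(\<Sum>i\<in>{i. i < a \<and> wt i \<le> n}. c i * b i) \<in> ideal_pow ?R ?M (Suc n)"
      and i: "i < a" "wt i \<le> n"
    define A where "A = {i. i < a \<and> wt i \<le> n}"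
    have finA: "finite A" unfolding A_def by simp
    have iA: "i \<in> A" using i unfolding A_def by simp
    have "\<forall>j\<in>A. \<exists>f. c j = fps_X^((n - wt j)*a) * f \<and> f \<in> ?R" using hc unfolding Ipow A_def by blast
    from bchoice[OF this] obtain g where g: "\<forall>j\<in>A. c j = fps_X^((n - wt j)*a) * g j \<and> g j \<in> ?R" by blast
    have cbg: "c j * b j = fps_X^(sv n j) * g j" if "j \<in> A" for j
      using g that unfolding b_def sv_def by (simp add: power_add ac_simps)
    have "fps_nth (\<Sum>j\<in>A. c j * b j) (sv n i) = (\<Sum>j\<in>A. fps_nth (fps_X^(sv n j) * g j) (sv n i))"
      by (simp add: fps_sum_nth cbg)
    also have "\<dots> = (\<Sum>j\<in>A. if j = i then fps_nth (g i) 0 else 0)"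
    proof (rule sum.cong)
      fix j assume jA: "j \<in> A"
      show "fps_nth (fps_X^(sv n j) * g j) (sv n i) = (if j = i then fps_nth (g i) 0 else 0)"
      proof (cases "j = i")
        case True then show ?thesis by (simp add: fps_X_power_mult_nth)
      next
        case False
        have "fps_nth (g j) (sv n i - sv n j) = 0" if le: "sv n j \<le> sv n i"
        proof (rule ccontr)
          assume nz: "fps_nth (g j) (sv n i - sv n j) \<noteq> 0"
          have "sv n i - sv n j \<in> T a d 0" using nz g jA unfolding Rring_T by blast
          moreover have "sv n i \<noteq> sv n j" using sv_inj[of i j n] False jA i unfolding A_def by auto
          ultimately have u: "sv n i - sv n j \<in> T a d 1" using le by (intro T_pos) auto
          have "sv n j \<in> T a d n" using w_T[of a d j "n - wt j"] jA unfolding sv_def A_def by simp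
          from T_add[OF this u] have "sv n i \<in> T a d (Suc n)" using le by simp
          thus False using not_next[OF assms(4,3) i] unfolding sv_def by blast
        qed
        then show ?thesis using False by (auto simp: fps_X_power_mult_nth)
      qed
    qed simp
    also have "\<dots> = fps_nth (g i) 0" using iA finA by simp
    finally have co: "fps_nth (\<Sum>j\<in>A. c j * b j) (sv n i) = fps_nth (g i) 0" .
    have "fps_nth (g i) 0 = 0"
    proof (rule ccontr)
      assume "fps_nth (g i) 0 \<noteq> 0"
      hence "sv n i \<in> T a d (Suc n)" using pow_sub[OF hs[folded A_def]] co by simp
      thus False using not_next[OF assms(4,3) i] unfolding sv_def by blast
    qed
    hence gM: "g i \<in> ?M" using g iA unfolding max_ideal_def by blast
    have "fps_X^((n - wt i)*a) * 1 \<in> ideal_pow ?R ?I (n - wt i)" unfolding Ipow using Rring_one by blast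
    hence "g i * (fps_X^((n - wt i)*a) * 1) \<in> ideal_prod ?M (ideal_pow ?R ?I (n - wt i))"
      using gM prod_mem by blast
    moreover have "c i = g i * (fps_X^((n - wt i)*a) * 1)" using g iA by (simp add: mult.commute)
    ultimately show "c i \<in> ideal_prod ?M (ideal_pow ?R ?I (n - wt i))" by simp
  qed
  have hb: "homog_basis ?R ?M ?I a b wt"
    unfolding homog_basis_def using hb1 hb2 hb3 by blast
  moreover have "\<forall>i<a. wt i \<le> a div 6 + 2" using wt_bound by blast
  moreover have "\<forall>k \<le> a div 6 + 2. card {i. i < a \<and> wt i = k} = tk a k"
  proof (intro allI impI)
    fix k
    have "{i. i < a \<and> wt i = k} = {i. i \<le> a - 1 \<and> wt i = k}" using a0 by auto
    thus "card {i. i < a \<and> wt i = k} = tk a k" unfolding tk_def by simp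
  qed
  ultimately show ?thesis by blast
qed

end
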